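(* Let $n\geqslant 1$, let $A=\{g,e_1,\ldots,e_n\}$ and let $R$ be the set of monoid relations on $A$: (R1) $g^n=1$; (R2) $e_i^2=e_i$ for $1\leqslant i\leqslant n$; (R3) $e_ie_j=e_je_i$ for $1\leqslant i<j\leqslant n$; (R4) $ge_1=e_ng$ and $ge_{i+1}=e_ig$ for $1\leqslant i\leqslant n-1$; (R5) $ge_1e_2\cdots e_n=e_1e_2\cdots e_n$. Then $\langle A\mid R\rangle$ is a monoid presentation of $\mathcal{CI}_n$ (with respect to the map sending the letter $g$ to the permutation $g$ and each letter $e_i$ to the partial identity $e_i$). It has $n+1$ generators and $\frac12(n^2+3n+4)$ relations.
   Context: Let $\Omega_n=\{1,\ldots,n\}$, $\mathcal{I}_n$ the symmetric inverse monoid on $\Omega_n$ (maps on the right, composed left to right). $g$ is the permutation $ig=i+1$ ($1\leqslant i\leqslant n-1$), $ng=1$; $\mathcal{C}_n=\{1,g,\ldots,g^{n-1}\}$; $\mathcal{CI}_n=\{\alpha\in\mathcal{I}_n\mid \alpha=\sigma|_{\mathrm{Dom}(\alpha)}\text{ for some }\sigma\in\mathcal{C}_n\}$; $e_i$ is the partial identity on $\Omega_n\setminus\{i\}$. A presentation $\langle A\mid R\rangle$ defines a monoid $M$ via a map $\phi:A\to M$ if $\phi$ is injective, $A\phi$ generates $M$, and the induced homomorphism $A^*\to M$ has kernel equal to the smallest congruence on the free monoid $A^*$ containing $R$. *)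

theory Defs
  imports Main
begin

text \<open>Partial injections on Omega_n = {1..n} are modelled as partial maps
  nat \<rightharpoonup> nat that are undefined outside {1..n}.  Maps act on the right and are
  composed left to right: (alpha * beta) x = beta (alpha x).\<close>

definition pmult :: "(nat \<rightharpoonup> nat) \<Rightarrow> (nat \<rightharpoonup> nat) \<Rightarrow> (nat \<rightharpoonup> nat)" where
  "pmult \<alpha> \<beta> = \<beta> \<circ>\<^sub>m \<alpha>"

definition pid :: "nat \<Rightarrow> (nat \<rightharpoonup> nat)" where
  "pid n = (\<lambda>i. if 1 \<le> i \<and> i \<le> n then Some i else None)"

definition gperm :: "nat \<Rightarrow> (nat \<rightharpoonup> nat)" where
  "gperm n = (\<lambda>i. if 1 \<le> i \<and> i < n then Some (i + 1) else if i = n \<and> 1 \<le> n then Some 1 else None)"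

definition ppow :: "nat \<Rightarrow> (nat \<rightharpoonup> nat) \<Rightarrow> nat \<Rightarrow> (nat \<rightharpoonup> nat)" where
  "ppow n \<alpha> k = ((\<lambda>\<beta>. pmult \<beta> \<alpha>) ^^ k) (pid n)"

definition eid :: "nat \<Rightarrow> nat \<Rightarrow> (nat \<rightharpoonup> nat)" where
  "eid n i = (\<lambda>j. if 1 \<le> j \<and> j \<le> n \<and> j \<noteq> i then Some j else None)"

definition Cn :: "nat \<Rightarrow> (nat \<rightharpoonup> nat) set" where
  "Cn n = {ppow n (gperm n) k | k. k < n}"

definition CIn :: "nat \<Rightarrow> (nat \<rightharpoonup> nat) set" where
  "CIn n = {\<sigma> |` D | \<sigma> D. \<sigma> \<in> Cn n \<and> D \<subseteq> {1..n}}"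

inductive_set cong_closure :: "'a set \<Rightarrow> ('a list \<times> 'a list) set \<Rightarrow> ('a list \<times> 'a list) set"
  for A R where
  base: "(u, v) \<in> R \<Longrightarrow> (u, v) \<in> cong_closure A R"
| refl: "u \<in> lists A \<Longrightarrow> (u, u) \<in> cong_closure A R"
| sym: "(u, v) \<in> cong_closure A R \<Longrightarrow> (v, u) \<in> cong_closure A R"
| trans: "(u, v) \<in> cong_closure A R \<Longrightarrow> (v, w) \<in> cong_closure A R \<Longrightarrow> (u, w) \<in> cong_closure A R"
| ctxt: "(u, v) \<in> cong_closure A R \<Longrightarrow> x \<in> lists A \<Longrightarrow> y \<in> lists A \<Longrightarrow>
         (x @ u @ y, x @ v @ y) \<in> cong_closure A R"

definition defines_monoid ::
  "'a set \<Rightarrow> ('a list \<times> 'a list) set \<Rightarrow> ('b \<Rightarrow> 'b \<Rightarrow> 'b) \<Rightarrow> 'b \<Rightarrow> 'b set \<Rightarrow> ('a \<Rightarrow> 'b) \<Rightarrow> bool" where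
  "defines_monoid A R mult one M \<phi> \<longleftrightarrow>
     R \<subseteq> lists A \<times> lists A \<and>
     inj_on \<phi> A \<and> \<phi> ` A \<subseteq> M \<and>
     {foldl mult one (map \<phi> w) | w. w \<in> lists A} = M \<and>
     (\<forall>u \<in> lists A. \<forall>v \<in> lists A.
        foldl mult one (map \<phi> u) = foldl mult one (map \<phi> v) \<longleftrightarrow> (u, v) \<in> cong_closure A R)"

datatype letter = G | E nat

definition alph :: "nat \<Rightarrow> letter set" where
  "alph n = insert G (E ` {1..n})"

definition phi :: "nat \<Rightarrow> letter \<Rightarrow> (nat \<rightharpoonup> nat)" where
  "phi n a = (case a of G \<Rightarrow> gperm n | E i \<Rightarrow> eid n i)"

definition R1 :: "nat \<Rightarrow> (letter list \<times> letter list) set" where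
  "R1 n = {(replicate n G, [])}"
definition R2 :: "nat \<Rightarrow> (letter list \<times> letter list) set" where
  "R2 n = {([E i, E i], [E i]) | i. 1 \<le> i \<and> i \<le> n}"
definition R3 :: "nat \<Rightarrow> (letter list \<times> letter list) set" where
  "R3 n = {([E i, E j], [E j, E i]) | i j. 1 \<le> i \<and> i < j \<and> j \<le> n}"
definition R4 :: "nat \<Rightarrow> (letter list \<times> letter list) set" where
  "R4 n = insert ([G, E 1], [E n, G]) {([G, E (i + 1)], [E i, G]) | i. 1 \<le> i \<and> i \<le> n - 1}"
definition R5 :: "nat \<Rightarrow> (letter list \<times> letter list) set" where
  "R5 n = {(G # map E [1..<n+1], map E [1..<n+1])}"

definition Rel :: "nat \<Rightarrow> (letter list \<times> letter list) set" where
  "Rel n = R1 n \<union> R2 n \<union> R3 n \<union> R4 n \<union> R5 n"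

end

theory Submission
  imports Defs
begin


definition ev :: "nat \<Rightarrow> letter list \<Rightarrow> (nat \<rightharpoonup> nat)" where
  "ev n w = foldl pmult (pid n) (map (phi n) w)"

definition rot :: "nat \<Rightarrow> nat \<Rightarrow> nat \<Rightarrow> nat" where
  "rot n k d = (d - 1 + k) mod n + 1"

definition sem :: "nat \<Rightarrow> nat set \<Rightarrow> nat \<Rightarrow> (nat \<rightharpoonup> nat)" where
  "sem n D k = (\<lambda>d. if d \<in> D then Some (rot n k d) else None)"

definition rng :: "nat \<Rightarrow> (nat \<rightharpoonup> nat) \<Rightarrow> bool" where
  "rng n a \<longleftrightarrow> (\<forall>x y. a x = Some y \<longrightarrow> 1 \<le> y \<and> y \<le> n)"

definition nfv :: "nat \<Rightarrow> nat set \<Rightarrow> nat \<Rightarrow> (nat \<rightharpoonup> nat)" where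
  "nfv n X k = (\<lambda>x. if x \<in> {1..n} \<and> rot n k x \<notin> X then Some (rot n k x) else None)"

definition ew :: "nat \<Rightarrow> nat set \<Rightarrow> letter list" where
  "ew n X = map E (filter (\<lambda>i. i \<in> X) [1..<Suc n])"

lemma pmult_assoc: "pmult (pmult a b) c = pmult a (pmult b c)"
  by (simp add: pmult_def map_comp_def fun_eq_iff split: option.split)

lemma foldl_pmult_assoc: "foldl pmult (pmult a b) l = pmult a (foldl pmult b l)"
  by (induction l arbitrary: b) (simp_all add: pmult_assoc)

lemma pmult_pid_right: "rng n a \<Longrightarrow> pmult a (pid n) = a"
  by (auto simp: rng_def pmult_def map_comp_def pid_def fun_eq_iff split: option.split)

lemma rng_phi: "rng n (phi n c)"
  by (auto simp: rng_def phi_def gperm_def eid_def split: letter.splits if_splits)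

lemma rng_pmult: "rng n b \<Longrightarrow> rng n (pmult a b)"
  by (auto simp: rng_def pmult_def map_comp_def split: option.splits)

lemma rng_pid: "rng n (pid n)" by (auto simp: rng_def pid_def split: if_splits)

lemma rng_foldl: "rng n a \<Longrightarrow> rng n (foldl pmult a (map (phi n) w))"
  by (induction w arbitrary: a) (simp_all add: rng_pmult rng_phi)

lemma rng_ev: "rng n (ev n w)"
  by (simp add: ev_def rng_foldl rng_pid)

lemma ev_append: "ev n (u @ v) = pmult (ev n u) (ev n v)"
proof -
  have "ev n (u@v) = foldl pmult (ev n u) (map (phi n) v)" by (simp add: ev_def)
  also have "... = foldl pmult (pmult (ev n u) (pid n)) (map (phi n) v)"
    using pmult_pid_right[OF rng_ev] by simp
  also have "... = pmult (ev n u) (ev n v)" by (simp add: foldl_pmult_assoc ev_def)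
  finally show ?thesis .
qed

lemma ev_Nil[simp]: "ev n [] = pid n" by (simp add: ev_def)

lemma ev_single: "ev n [c] = phi n c"
  by (auto simp: ev_def pmult_def map_comp_def pid_def phi_def gperm_def eid_def fun_eq_iff
      split: letter.splits option.splits)

lemma ev_Cons: "ev n (c # w) = pmult (phi n c) (ev n w)"
  using ev_append[of n "[c]" w] by (simp add: ev_single)

lemma rot_range: "n \<ge> 1 \<Longrightarrow> 1 \<le> rot n k d \<and> rot n k d \<le> n"
  by (simp add: rot_def) (meson Suc_leI mod_less_divisor not_le not_less_eq_eq)

lemma rot_add: "d \<ge> 1 \<Longrightarrow> rot n b (rot n a d) = rot n (a+b) d"
  by (simp add: rot_def mod_add_left_eq add.assoc)

lemma rot_0: "d \<in> {1..n} \<Longrightarrow> rot n 0 d = d"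
proof -
  assume "d \<in> {1..n}"
  hence "d - 1 < n" "d \<ge> 1" by auto
  thus ?thesis by (simp add: rot_def)
qed

lemma rot_n: "d \<in> {1..n} \<Longrightarrow> rot n n d = d"
proof -
  assume "d \<in> {1..n}"
  hence a: "d - 1 < n" "d \<ge> 1" by auto
  have "(d - 1 + n) mod n = (d - 1) mod n" by (rule mod_add_self2)
  also have "... = d - 1" using a by simp
  finally show ?thesis using a unfolding rot_def by linarith
qed

lemma mod_cancel_aux: "(c + a) mod n = (c + b) mod (n::nat) \<Longrightarrow> b \<le> a \<Longrightarrow> a < n \<Longrightarrow> a = b"
proof -
  assume h: "(c + a) mod n = (c + b) mod n" "b \<le> a" "a < n"
  hence "n dvd (c + a) - (c + b)" using mod_eq_dvd_iff_nat by simp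
  hence "n dvd a - b" by simp
  moreover have "a - b < n" using h by simp
  ultimately have "a - b = 0" using dvd_imp_le by (metis gr0I leD)
  thus ?thesis using h by simp
qed

lemma rot_inj: "d \<in> {1..n} \<Longrightarrow> a < n \<Longrightarrow> b < n \<Longrightarrow> rot n a d = rot n b d \<Longrightarrow> a = b"
proof -
  assume d: "d \<in> {1..n}" and ab: "a < n" "b < n" and r: "rot n a d = rot n b d"
  hence e: "(d - 1 + a) mod n = (d - 1 + b) mod n" by (simp add: rot_def)
  show "a = b"
  proof (cases "b \<le> a")
    case True thus ?thesis using mod_cancel_aux[OF e] ab by simp
  next
    case False thus ?thesis using mod_cancel_aux[OF e[symmetric]] ab by simp
  qed
qed

lemma gperm_sem: "n \<ge> 1 \<Longrightarrow> gperm n = sem n {1..n} 1"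
proof (rule ext)
  fix d assume n: "n \<ge> 1"
  show "gperm n d = sem n {1..n} 1 d"
  proof (cases "1 \<le> d \<and> d < n")
    case True thus ?thesis by (auto simp: gperm_def sem_def rot_def)
  next
    case False
    moreover have "d = n \<Longrightarrow> rot n 1 d = 1" using n by (simp add: rot_def)
    ultimately show ?thesis using n by (auto simp: gperm_def sem_def)
  qed
qed

lemma sem_mult: "n \<ge> 1 \<Longrightarrow> D \<subseteq> {1..n} \<Longrightarrow> pmult (sem n D a) (sem n {1..n} b) = sem n D (a+b)"
proof (rule ext)
  fix x assume n: "n \<ge> 1" and D: "D \<subseteq> {1..n}"
  show "pmult (sem n D a) (sem n {1..n} b) x = sem n D (a+b) x"
  proof (cases "x \<in> D")
    case True
    hence "x \<ge> 1" using D by auto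
    thus ?thesis using True rot_range[OF n, of a x] rot_add[of x n b a]
      by (simp add: pmult_def sem_def)
  qed (simp add: pmult_def sem_def)
qed

lemma pid_sem: "pid n = sem n {1..n} 0"
  by (rule ext) (simp add: pid_def sem_def rot_0)

lemma ev_rep: "n \<ge> 1 \<Longrightarrow> ev n (replicate k G) = sem n {1..n} k"
proof (induction k)
  case 0 thus ?case by (simp add: pid_sem)
next
  case (Suc k)
  have "ev n (replicate (Suc k) G) = pmult (sem n {1..n} 1) (sem n {1..n} k)"
    using Suc by (simp add: ev_Cons phi_def gperm_sem)
  also have "... = sem n {1..n} (Suc k)" using sem_mult[OF Suc.prems order.refl, of 1 k] by simp
  finally show ?case .
qed

lemma ppow_sem: "n \<ge> 1 \<Longrightarrow> ppow n (gperm n) k = sem n {1..n} k"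
proof (induction k)
  case 0 thus ?case by (simp add: ppow_def pid_sem)
next
  case (Suc k)
  have "ppow n (gperm n) (Suc k) = pmult (ppow n (gperm n) k) (gperm n)"
    by (simp add: ppow_def)
  also have "... = sem n {1..n} (Suc k)"
    using Suc sem_mult[OF Suc.prems order.refl, of k 1] by (simp add: gperm_sem)
  finally show ?case .
qed

lemma ev_mapE: "ev n (map E l) = (\<lambda>x. if x \<in> {1..n} \<and> x \<notin> set l then Some x else None)"
  by (induction l) (auto simp: ev_Cons pid_def pmult_def phi_def eid_def fun_eq_iff map_comp_def)

lemma ev_nf: "n \<ge> 1 \<Longrightarrow> ev n (replicate k G @ ew n X) = nfv n X k"
proof -
  assume n: "n \<ge> 1"
  have s: "set (filter (\<lambda>i. i \<in> X) [1..<Suc n]) = X \<inter> {1..n}" by auto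
  show ?thesis
    unfolding ev_append ev_rep[OF n] ew_def ev_mapE s
  proof (rule ext)
    fix x
    have "1 \<le> rot n k x \<and> rot n k x \<le> n" using rot_range[OF n] by blast
    thus "pmult (sem n {1..n} k) (\<lambda>x. if x \<in> {1..n} \<and> x \<notin> X \<inter> {1..n} then Some x else None) x = nfv n X k x"
      by (auto simp: pmult_def sem_def nfv_def map_comp_def)
  qed
qed

lemma nfv_hit: "n \<ge> 1 \<Longrightarrow> y \<in> {1..n} \<Longrightarrow> k \<le> n \<Longrightarrow>
   rot n (n-k) y \<in> {1..n} \<and> nfv n X k (rot n (n-k) y) = (if y \<in> X then None else Some y)"
proof -
  assume n: "n \<ge> 1" and y: "y \<in> {1..n}" and k: "k \<le> n"
  have "rot n k (rot n (n-k) y) = y" using y k by (simp add: rot_add rot_n)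
  thus ?thesis using rot_range[OF n, of "n-k" y] by (auto simp: nfv_def)
qed

lemma nfv_inj: assumes n: "n \<ge> 1" and X: "X \<subseteq> {1..n}" "X' \<subseteq> {1..n}" and k: "k < n" "k' < n"
  and c: "X = {1..n} \<longrightarrow> k = 0" "X' = {1..n} \<longrightarrow> k' = 0"
  and e: "nfv n X k = nfv n X' k'"
shows "X = X' \<and> k = k'"
proof -
  have nz: "\<exists>x. nfv n Y j x \<noteq> None" if Yh: "Y \<subseteq> {1..n}" "Y \<noteq> {1..n}" "j < n" for Y j
  proof -
    obtain y where "y \<in> {1..n}" "y \<notin> Y" using Yh(1,2) by blast
    thus ?thesis using nfv_hit[OF n, of y j Y] Yh by auto
  qed
  have emp: "nfv n {1..n} 0 x = None" for x using rot_range[OF n] by (simp add: nfv_def)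
  show ?thesis
  proof (cases "X = {1..n}")
    case True
    hence "X' = {1..n}" using nz[OF X(2) _ k(2)] e c emp by (metis)
    thus ?thesis using True c by simp
  next
    case False
    obtain y where y: "y \<in> {1..n}" "y \<notin> X" using False X by blast
    obtain x where x: "x \<in> {1..n}" "nfv n X k x = Some y" using nfv_hit[OF n y(1), of k X] k y by auto
    hence "rot n k x = y" by (auto simp: nfv_def split: if_splits)
    moreover have "nfv n X' k' x = Some y" using x e by simp
    hence "rot n k' x = y" by (auto simp: nfv_def split: if_splits)
    ultimately have kk: "k = k'" using rot_inj[OF x(1) k] by simp
    have "z \<in> X \<longleftrightarrow> z \<in> X'" if z: "z \<in> {1..n}" for z
      using nfv_hit[OF n z, of k X] nfv_hit[OF n z, of k X'] e kk k
      by (metis less_imp_le option.distinct(1))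
    hence "X = X'" using X by blast
    thus ?thesis using kk by simp
  qed
qed



abbreviation CC :: "nat \<Rightarrow> letter list \<Rightarrow> letter list \<Rightarrow> bool" where
  "CC n u v \<equiv> (u, v) \<in> cong_closure (alph n) (Rel n)"

lemma Rel_lists: "n \<ge> 1 \<Longrightarrow> Rel n \<subseteq> lists (alph n) \<times> lists (alph n)"
  by (auto simp: Rel_def R1_def R2_def R3_def R4_def R5_def alph_def)

lemma cc_lists: "(u,v) \<in> cong_closure A R \<Longrightarrow> R \<subseteq> lists A \<times> lists A \<Longrightarrow> u \<in> lists A \<and> v \<in> lists A"
  by (induction rule: cong_closure.induct) auto

lemma cc_left: "(u,v) \<in> cong_closure A R \<Longrightarrow> x \<in> lists A \<Longrightarrow> (x@u, x@v) \<in> cong_closure A R"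
  using cong_closure.ctxt[of u v A R x "[]"] by simp

lemma cc_right: "(u,v) \<in> cong_closure A R \<Longrightarrow> y \<in> lists A \<Longrightarrow> (u@y, v@y) \<in> cong_closure A R"
  using cong_closure.ctxt[of u v A R "[]" y] by simp

lemma ew_lists: "ew n X \<in> lists (alph n)"
  by (auto simp: ew_def alph_def)

lemma rep_lists: "replicate k G \<in> lists (alph n)"
  by (auto simp: alph_def)

lemma ins_lemma: "sorted_wrt (<) l \<Longrightarrow> j \<in> set l \<Longrightarrow> set l \<subseteq> {1..n} \<Longrightarrow>
  CC n (E j # map E (filter (\<lambda>i. i \<in> X) l)) (map E (filter (\<lambda>i. i \<in> insert j X) l))"
proof (induction l)
  case Nil thus ?case by simp
next
  case (Cons b l)
  have bl: "\<forall>x\<in>set l. b < x" "sorted_wrt (<) l" using Cons.prems(1) by auto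
  have rl: "map E (filter P l) \<in> lists (alph n)" for P using Cons.prems(3) by (force simp: alph_def)
  show ?case
  proof (cases "j = b")
    case True
    hence jl: "j \<notin> set l" using bl by auto
    have f: "filter (\<lambda>i. i \<in> insert j X) l = filter (\<lambda>i. i \<in> X) l"
      using jl by (intro filter_cong) auto
    show ?thesis
    proof (cases "b \<in> X")
      case bX: True
      have "([E b, E b], [E b]) \<in> Rel n" using Cons.prems(3) by (auto simp: Rel_def R2_def)
      hence "CC n ([E b, E b] @ map E (filter (\<lambda>i. i \<in> X) l)) ([E b] @ map E (filter (\<lambda>i. i \<in> X) l))"
        by (rule cc_right[OF cong_closure.base rl])
      thus ?thesis using True bX f by simp
    next
      case False
      have "CC n (E b # map E (filter (\<lambda>i. i \<in> X) l)) (E b # map E (filter (\<lambda>i. i \<in> X) l))"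
        using Cons.prems(3) rl by (intro cong_closure.refl) (auto simp: alph_def)
      thus ?thesis using True False f by simp
    qed
  next
    case False
    hence jl: "j \<in> set l" and bj: "b < j" using Cons.prems bl by auto
    have IH: "CC n (E j # map E (filter (\<lambda>i. i \<in> X) l)) (map E (filter (\<lambda>i. i \<in> insert j X) l))"
      using Cons.IH[OF bl(2) jl] Cons.prems(3) by auto
    have Eb: "[E b] \<in> lists (alph n)" using Cons.prems(3) by (auto simp: alph_def)
    show ?thesis
    proof (cases "b \<in> X")
      case bX: True
      have "([E b, E j], [E j, E b]) \<in> Rel n" using Cons.prems(3) bj jl
        by (auto simp: Rel_def R3_def)
      hence "CC n ([E j, E b] @ map E (filter (\<lambda>i. i \<in> X) l)) ([E b, E j] @ map E (filter (\<lambda>i. i \<in> X) l))"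
        by (rule cc_right[OF cong_closure.sym[OF cong_closure.base] rl])
      hence A: "CC n (E j # E b # map E (filter (\<lambda>i. i \<in> X) l)) (E b # E j # map E (filter (\<lambda>i. i \<in> X) l))"
        by simp
      have B: "CC n (E b # E j # map E (filter (\<lambda>i. i \<in> X) l)) (E b # map E (filter (\<lambda>i. i \<in> insert j X) l))"
        using cc_left[OF IH Eb] by simp
      have "CC n (E j # E b # map E (filter (\<lambda>i. i \<in> X) l)) (E b # map E (filter (\<lambda>i. i \<in> insert j X) l))"
        by (rule cong_closure.trans[OF A B])
      thus ?thesis using bX by simp
    next
      case bX: False
      thus ?thesis using IH False by simp
    qed
  qed
qed

lemma ins_ew: "j \<in> {1..n} \<Longrightarrow> CC n (E j # ew n X) (ew n (insert j X))"
  unfolding ew_def by (rule ins_lemma[OF sorted_wrt_upt]) auto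

lemma commute1: "i \<in> {1..n} \<Longrightarrow> \<exists>j\<in>{1..n}. CC n [E i, G] [G, E j]"
proof -
  assume i: "i \<in> {1..n}"
  show ?thesis
  proof (cases "i < n")
    case True
    hence "([G, E (i+1)], [E i, G]) \<in> Rel n" using i by (auto simp: Rel_def R4_def)
    thus ?thesis using True i by (intro bexI[of _ "i+1"] cong_closure.sym[OF cong_closure.base]) auto
  next
    case False
    hence "i = n" using i by auto
    hence "([G, E 1], [E i, G]) \<in> Rel n" by (auto simp: Rel_def R4_def)
    thus ?thesis using i by (intro bexI[of _ 1] cong_closure.sym[OF cong_closure.base]) auto
  qed
qed

lemma commute: "i \<in> {1..n} \<Longrightarrow> \<exists>j\<in>{1..n}. CC n (E i # replicate k G) (replicate k G @ [E j])"
proof (induction k arbitrary: i)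
  case 0
  have "[E i] \<in> lists (alph n)" using 0 by (auto simp: alph_def)
  thus ?case using 0 by (intro bexI[of _ i]) (auto intro: cong_closure.refl)
next
  case (Suc k)
  obtain j where j: "j \<in> {1..n}" "CC n [E i, G] [G, E j]" using commute1[OF Suc.prems] by blast
  obtain j' where j': "j' \<in> {1..n}" "CC n (E j # replicate k G) (replicate k G @ [E j'])"
    using Suc.IH[OF j(1)] by blast
  have A: "CC n ([E i, G] @ replicate k G) ([G, E j] @ replicate k G)"
    by (rule cc_right[OF j(2) rep_lists])
  have B: "CC n ([G] @ (E j # replicate k G)) ([G] @ (replicate k G @ [E j']))"
    by (rule cc_left[OF j'(2)]) (auto simp: alph_def)
  have "CC n ([E i, G] @ replicate k G) ([G] @ (replicate k G @ [E j']))"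
    using cong_closure.trans[OF A] B by simp
  hence "CC n (E i # replicate (Suc k) G) (replicate (Suc k) G @ [E j'])"
    by simp
  thus ?case using j' by blast
qed

lemma ew_full: "ew n {1..n} = map E [1..<n+1]"
  by (simp add: ew_def)

lemma R5_rel: "n \<ge> 1 \<Longrightarrow> CC n (G # ew n {1..n}) (ew n {1..n})"
  unfolding ew_full by (rule cong_closure.base) (simp add: Rel_def R5_def)

lemma rep_G: "replicate k G @ (G # L) = G # (replicate k G @ L)"
  by (induction k) auto

lemma R5k: "n \<ge> 1 \<Longrightarrow> CC n (replicate k G @ ew n {1..n}) (ew n {1..n})"
proof (induction k)
  case 0 thus ?case by (simp add: cong_closure.refl ew_lists)
next
  case (Suc k)
  have "CC n (replicate k G @ (G # ew n {1..n})) (replicate k G @ ew n {1..n})"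
    by (rule cc_left[OF R5_rel[OF Suc.prems] rep_lists])
  hence "CC n (replicate (Suc k) G @ ew n {1..n}) (replicate k G @ ew n {1..n})"
    by (simp only: rep_G replicate_Suc append_Cons)
  thus ?case by (rule cong_closure.trans[OF _ Suc.IH[OF Suc.prems]])
qed


lemma nf_exists: "n \<ge> 1 \<Longrightarrow> w \<in> lists (alph n) \<Longrightarrow>
  \<exists>X k. X \<subseteq> {1..n} \<and> k < n \<and> (X = {1..n} \<longrightarrow> k = 0) \<and> CC n w (replicate k G @ ew n X)"
proof (induction w)
  case Nil
  have "ew n {} = []" by (simp add: ew_def)
  thus ?case using Nil by (intro exI[of _ "{}"] exI[of _ 0]) (auto intro: cong_closure.refl)
next
  case (Cons a w)
  then obtain X k where X: "X \<subseteq> {1..n}" "k < n" "X = {1..n} \<longrightarrow> k = 0"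
    "CC n w (replicate k G @ ew n X)" by auto
  have a: "a \<in> alph n" using Cons.prems by simp
  have H: "CC n ([a] @ w) ([a] @ (replicate k G @ ew n X))"
    by (rule cc_left[OF X(4)]) (simp add: a)
  show ?case
  proof (cases a)
    case G
    show ?thesis
    proof (cases "X = {1..n}")
      case True
      hence "CC n (a # w) (G # ew n X)" using H X(3) G by simp
      hence "CC n (a # w) (ew n X)" using True cong_closure.trans[OF _ R5_rel[OF Cons.prems(1)]] by simp
      thus ?thesis using True Cons.prems(1) by (intro exI[of _ X] exI[of _ 0]) auto
    next
      case False
      show ?thesis
      proof (cases "Suc k < n")
        case True
        thus ?thesis using H X False G by (intro exI[of _ X] exI[of _ "Suc k"]) auto
      next
        case False2: False
        hence kn: "Suc k = n" using X by auto
        have "(replicate n G, []) \<in> Rel n" by (simp add: Rel_def R1_def)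
        hence "CC n (replicate n G @ ew n X) ([] @ ew n X)"
          by (rule cc_right[OF cong_closure.base ew_lists])
        hence C: "CC n (replicate n G @ ew n X) (ew n X)" by simp
        have D: "CC n (a # w) (replicate n G @ ew n X)" using H G kn[symmetric] by simp
        have "CC n (a # w) (ew n X)" by (rule cong_closure.trans[OF D C])
        thus ?thesis using X False Cons.prems(1) by (intro exI[of _ X] exI[of _ 0]) auto
      qed
    qed
  next
    case (E i)
    hence i: "i \<in> {1..n}" using a by (auto simp: alph_def)
    obtain j where j: "j \<in> {1..n}" "CC n (E i # replicate k G) (replicate k G @ [E j])"
      using commute[OF i] by blast
    have A1: "CC n (E i # replicate k G @ ew n X) (replicate k G @ E j # ew n X)"
      using cc_right[OF j(2) ew_lists] by simp
    have A2: "CC n (replicate k G @ E j # ew n X) (replicate k G @ ew n (insert j X))"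
      by (rule cc_left[OF ins_ew[OF j(1)] rep_lists])
    have A0: "CC n (a # w) (E i # replicate k G @ ew n X)" using H E by simp
    have H2: "CC n (a # w) (replicate k G @ ew n (insert j X))"
      by (rule cong_closure.trans[OF A0 cong_closure.trans[OF A1 A2]])
    have sub: "insert j X \<subseteq> {1..n}" using X j by auto
    show ?thesis
    proof (cases "insert j X = {1..n}")
      case True
      hence "CC n (a # w) (replicate 0 G @ ew n (insert j X))"
        using cong_closure.trans[OF H2] R5k[OF Cons.prems(1), of k] True by simp
      moreover have "0 < n" using Cons.prems(1) by simp
      ultimately show ?thesis using sub by (intro exI[of _ "insert j X"] exI[of _ 0]) simp
    next
      case False
      thus ?thesis using sub H2 X(2) by (intro exI[of _ "insert j X"] exI[of _ k]) simp
    qed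
  qed
qed



lemma rel_sound: assumes n: "n \<ge> 1" and r: "(u,v) \<in> Rel n" shows "ev n u = ev n v"
proof -
  have "(u,v) \<in> R1 n \<or> (u,v) \<in> R2 n \<or> (u,v) \<in> R3 n \<or> (u,v) \<in> R4 n \<or> (u,v) \<in> R5 n"
    using r by (simp add: Rel_def)
  thus ?thesis
  proof (elim disjE)
    assume "(u,v) \<in> R1 n"
    hence uv: "u = replicate n G" "v = []" by (auto simp: R1_def)
    have "sem n {1..n} n = sem n {1..n} 0" by (rule ext) (simp add: sem_def rot_n rot_0)
    thus ?thesis using uv ev_rep[OF n, of n] ev_rep[OF n, of 0] by simp
  next
    assume "(u,v) \<in> R2 n"
    then obtain i where uv: "u = map E [i,i]" "v = map E [i]" by (auto simp: R2_def)
    show ?thesis unfolding uv ev_mapE by simp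
  next
    assume "(u,v) \<in> R3 n"
    then obtain i j where uv: "u = map E [i,j]" "v = map E [j,i]" by (auto simp: R3_def)
    show ?thesis unfolding uv ev_mapE by auto
  next
    assume "(u,v) \<in> R4 n"
    then obtain i where uv: "(u = [G, E 1] \<and> v = [E n, G]) \<or> (u = [G, E (i+1)] \<and> v = [E i, G] \<and> 1 \<le> i \<and> i \<le> n - 1)"
      by (auto simp: R4_def)
    thus ?thesis
      by (elim disjE conjE; simp only: ev_Cons ev_Nil;
          auto simp: pmult_def phi_def gperm_def eid_def pid_def map_comp_def fun_eq_iff)
  next
    assume "(u,v) \<in> R5 n"
    hence uv: "u = G # map E [1..<n+1]" "v = map E [1..<n+1]" by (auto simp: R5_def)
    show ?thesis unfolding uv ev_Cons ev_mapE
      by (auto simp: pmult_def map_comp_def fun_eq_iff split: option.splits)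
  qed
qed

lemma cc_sound: "(u,v) \<in> cong_closure A R \<Longrightarrow> A = alph n \<Longrightarrow> R = Rel n \<Longrightarrow> n \<ge> 1 \<Longrightarrow> ev n u = ev n v"
  by (induction rule: cong_closure.induct) (auto simp: rel_sound ev_append)

lemma nfv_CIn: "n \<ge> 1 \<Longrightarrow> k < n \<Longrightarrow> nfv n X k \<in> CIn n"
proof -
  assume n: "n \<ge> 1" and k: "k < n"
  have "nfv n X k = ppow n (gperm n) k |` {x \<in> {1..n}. rot n k x \<notin> X}"
    by (rule ext) (simp add: ppow_sem[OF n] nfv_def sem_def restrict_map_def)
  moreover have "ppow n (gperm n) k \<in> Cn n" using k by (auto simp: Cn_def)
  ultimately show ?thesis unfolding CIn_def by blast
qed

lemma ev_CIn: "n \<ge> 1 \<Longrightarrow> w \<in> lists (alph n) \<Longrightarrow> ev n w \<in> CIn n"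
proof -
  assume n: "n \<ge> 1" and w: "w \<in> lists (alph n)"
  obtain X k where X: "X \<subseteq> {1..n}" "k < n" "CC n w (replicate k G @ ew n X)"
    using nf_exists[OF n w] by blast
  have "ev n w = nfv n X k" using cc_sound[OF X(3) HOL.refl HOL.refl n] ev_nf[OF n] by simp
  thus ?thesis using nfv_CIn[OF n X(2)] by simp
qed

lemma CIn_ev: assumes n: "n \<ge> 1" and a: "\<alpha> \<in> CIn n" shows "\<exists>w \<in> lists (alph n). ev n w = \<alpha>"
proof -
  obtain \<sigma> D where s: "\<alpha> = \<sigma> |` D" "\<sigma> \<in> Cn n" "D \<subseteq> {1..n}" using a by (auto simp: CIn_def)
  obtain k where k: "\<sigma> = ppow n (gperm n) k" "k < n" using s(2) by (auto simp: Cn_def)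
  define X where "X = {y \<in> {1..n}. rot n (n-k) y \<notin> D}"
  have "nfv n X k = \<alpha>"
  proof (rule ext)
    fix x show "nfv n X k x = \<alpha> x"
    proof (cases "x \<in> {1..n}")
      case True
      have rr: "rot n (n-k) (rot n k x) = x" using True k by (simp add: rot_add rot_n)
      have "rot n k x \<in> {1..n}" using rot_range[OF n] by simp
      hence "rot n k x \<notin> X \<longleftrightarrow> x \<in> D" using rr by (simp add: X_def)
      thus ?thesis using True by (simp add: nfv_def s(1) k(1) ppow_sem[OF n] sem_def restrict_map_def)
    next
      case False
      hence "x \<notin> D" using s(3) by auto
      thus ?thesis using False by (auto simp: nfv_def s(1) restrict_map_def)
    qed
  qed
  moreover have "replicate k G @ ew n X \<in> lists (alph n)" using rep_lists ew_lists by simp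
  ultimately show ?thesis using ev_nf[OF n] by metis
qed

lemma complete: assumes n: "n \<ge> 1" and u: "u \<in> lists (alph n)" and v: "v \<in> lists (alph n)"
  and e: "ev n u = ev n v" shows "CC n u v"
proof -
  obtain X k where X: "X \<subseteq> {1..n}" "k < n" "X = {1..n} \<longrightarrow> k = 0" "CC n u (replicate k G @ ew n X)"
    using nf_exists[OF n u] by blast
  obtain X' k' where X': "X' \<subseteq> {1..n}" "k' < n" "X' = {1..n} \<longrightarrow> k' = 0" "CC n v (replicate k' G @ ew n X')"
    using nf_exists[OF n v] by blast
  have "nfv n X k = nfv n X' k'"
    using cc_sound[OF X(4) HOL.refl HOL.refl n] cc_sound[OF X'(4) HOL.refl HOL.refl n] e ev_nf[OF n] by simp
  hence "X = X' \<and> k = k'" using nfv_inj[OF n X(1) X'(1) X(2) X'(2) X(3) X'(3)] by simp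
  hence "CC n v (replicate k G @ ew n X)" using X'(4) by simp
  hence "CC n (replicate k G @ ew n X) v" by (rule cong_closure.sym)
  thus ?thesis using cong_closure.trans[OF X(4)] by blast
qed



definition Pn :: "nat \<Rightarrow> (nat \<times> nat) set" where
  "Pn n = {(i,j). 1 \<le> i \<and> i < j \<and> j \<le> n}"

lemma Pn_finite: "finite (Pn n)"
  by (rule finite_subset[of _ "{1..n} \<times> {1..n}"]) (auto simp: Pn_def)

lemma Pn_card: "card (Pn n) * 2 = n * (n - 1)"
proof (induction n)
  case 0
  have "Pn 0 = {}" by (auto simp: Pn_def)
  thus ?case by simp
next
  case (Suc n)
  have eq: "Pn (Suc n) = Pn n \<union> (\<lambda>i. (i, Suc n)) ` {1..n}" by (auto simp: Pn_def)
  have d: "Pn n \<inter> (\<lambda>i. (i, Suc n)) ` {1..n} = {}" unfolding Pn_def by auto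
  have "card (Pn (Suc n)) = card (Pn n) + n"
  proof -
    have "inj_on (\<lambda>i. (i, Suc n)) {1..n}" by (auto simp: inj_on_def)
    hence "card ((\<lambda>i. (i, Suc n)) ` {1..n}) = n" by (simp add: card_image)
    thus ?thesis unfolding eq using card_Un_disjoint[OF Pn_finite _ d] by simp
  qed
  thus ?case using Suc by (cases n) (auto simp: algebra_simps)
qed

lemma card_Rel: assumes n: "n \<ge> 1" shows "card (Rel n) = (n^2 + 3*n + 4) div 2"
proof -
  have c1: "card (R1 n) = 1" "finite (R1 n)" by (simp_all add: R1_def)
  have c5: "card (R5 n) = 1" "finite (R5 n)" by (simp_all add: R5_def)
  have e2: "R2 n = (\<lambda>i. ([E i, E i], [E i])) ` {1..n}" by (auto simp: R2_def)
  have c2: "card (R2 n) = n" "finite (R2 n)" unfolding e2 by (auto simp: card_image inj_on_def)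
  have e3: "R3 n = (\<lambda>(i,j). ([E i, E j], [E j, E i])) ` Pn n" by (auto simp: R3_def Pn_def)
  have inj3: "inj_on (\<lambda>(i,j). ([E i, E j], [E j, E i])) (Pn n)" by (auto simp: inj_on_def)
  have c3: "card (R3 n) = card (Pn n)" "finite (R3 n)" unfolding e3
    using card_image[OF inj3] Pn_finite by auto
  have e4: "R4 n = insert ([G, E 1], [E n, G]) ((\<lambda>i. ([G, E (i + 1)], [E i, G])) ` {1..n-1})"
    by (auto simp: R4_def)
  have nin: "([G, E 1], [E n, G]) \<notin> (\<lambda>i. ([G, E (i + 1)], [E i, G])) ` {1..n-1}" by auto
  have c4: "card (R4 n) = n" "finite (R4 n)" unfolding e4 using nin n
    by (auto simp: card_image inj_on_def)
  have d12: "R1 n \<inter> R2 n = {}" by (auto simp: R1_def R2_def Cons_replicate_eq)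
  have d123: "(R1 n \<union> R2 n) \<inter> R3 n = {}" by (auto simp: R1_def R2_def R3_def Cons_replicate_eq)
  have d1234: "(R1 n \<union> R2 n \<union> R3 n) \<inter> R4 n = {}"
    by (auto simp: R1_def R2_def R3_def R4_def Cons_replicate_eq)
  have d5: "(R1 n \<union> R2 n \<union> R3 n \<union> R4 n) \<inter> R5 n = {}"
    using n by (cases n) (auto simp: R1_def R2_def R3_def R4_def R5_def Cons_replicate_eq upt_rec)
  have "card (Rel n) = 1 + n + card (Pn n) + n + 1"
    unfolding Rel_def
    by (simp add: card_Un_disjoint c1 c2 c3 c4 c5 d12 d123 d1234 d5)
  moreover have "n^2 + 3*n + 4 = 2 * (1 + n + card (Pn n) + n + 1)"
  proof -
    obtain m where m: "n = Suc m" using n by (cases n) auto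
    have "card (Pn n) * 2 = (Suc m) * m" using Pn_card[of n] m by simp
    thus ?thesis using m by (simp add: power2_eq_square algebra_simps)
  qed
  ultimately show ?thesis by simp
qed

lemma inj_phi: "n \<ge> 1 \<Longrightarrow> inj_on (phi n) (alph n)"
proof (rule inj_onI)
  fix a b assume n: "n \<ge> 1" and a: "a \<in> alph n" and b: "b \<in> alph n" and e: "phi n a = phi n b"
  have gE: "False" if "gperm n = eid n i" "i \<in> {1..n}" for i
  proof -
    have "gperm n i = eid n i i" using that by simp
    thus False using that by (auto simp: gperm_def eid_def split: if_splits)
  qed
  have EE: "i = j" if "eid n i = eid n j" "i \<in> {1..n}" for i j
  proof (rule ccontr)
    assume "i \<noteq> j"
    have "eid n i i = eid n j i" using that by simp
    thus False using that \<open>i \<noteq> j\<close> by (auto simp: eid_def)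
  qed
  show "a = b"
  proof (cases a)
    case G
    show ?thesis
    proof (cases b)
      case (E j)
      hence "gperm n = eid n j" "j \<in> {1..n}" using e b G by (auto simp: phi_def alph_def)
      thus ?thesis using gE by blast
    qed (simp add: G)
  next
    case (E i)
    show ?thesis
    proof (cases b)
      case G
      hence "gperm n = eid n i" "i \<in> {1..n}" using e a E by (auto simp: phi_def alph_def)
      thus ?thesis using gE by blast
    next
      case (E j)
      hence "eid n i = eid n j" "i \<in> {1..n}" using e a \<open>a = E i\<close> by (auto simp: phi_def alph_def)
      thus ?thesis using EE E \<open>a = E i\<close> by blast
    qed
  qed
qed

theorem theorem2p6:
  fixes n :: nat
  assumes "n \<ge> 1"
  shows "defines_monoid (alph n) (Rel n) pmult (pid n) (CIn n) (phi n)
         \<and> card (alph n) = n + 1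
         \<and> card (Rel n) = (n^2 + 3*n + 4) div 2"
proof -
  have n: "n \<ge> 1" by (rule assms)
  have ev: "foldl pmult (pid n) (map (phi n) w) = ev n w" for w by (simp add: ev_def)
  have img: "phi n ` alph n \<subseteq> CIn n"
  proof
    fix x assume "x \<in> phi n ` alph n"
    then obtain a where a: "a \<in> alph n" "x = phi n a" by blast
    have "ev n [a] \<in> CIn n" using ev_CIn[OF n] a by simp
    thus "x \<in> CIn n" using a ev_single by metis
  qed
  have gen: "{foldl pmult (pid n) (map (phi n) w) | w. w \<in> lists (alph n)} = CIn n"
    unfolding ev using ev_CIn[OF n] CIn_ev[OF n] by blast
  have cc: "\<forall>u \<in> lists (alph n). \<forall>v \<in> lists (alph n).
        foldl pmult (pid n) (map (phi n) u) = foldl pmult (pid n) (map (phi n) v) \<longleftrightarrow> (u, v) \<in> cong_closure (alph n) (Rel n)"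
    unfolding ev using complete[OF n] cc_sound[OF _ HOL.refl HOL.refl n] by blast
  have injE: "inj_on E {1..n}" by (auto simp: inj_on_def)
  have "G \<notin> E ` {1..n}" by auto
  hence ca: "card (alph n) = n + 1"
    using card_image[OF injE] by (simp add: alph_def)
  show ?thesis
    unfolding defines_monoid_def
    using Rel_lists[OF n] inj_phi[OF n] img gen cc ca card_Rel[OF n] by blast
qed


end
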